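(* If $Y^*\in\mathcal L^1(\mathcal Q)$, then $$\sup_{\tau\in\mathcal T}\inf_{\mathrm Q\in\overline{\mathcal Q}}\mathbb E_{\mathrm Q}[Y_\tau]=\sup_{\tau\in\mathcal T}\inf_{\mathrm Q\in\mathcal Q}\mathbb E_{\mathrm Q}[Y_\tau]=\sup_{\tau\in\mathcal T}\inf_{\mathrm Q\in co(\mathcal Q)}\mathbb E_{\mathrm Q}[Y_\tau].$$
   Context: Let $(\Omega,\mathcal F,(\mathcal F_t)_{0\le t\le T},\mathrm P)$ be a filtered probability space ($0<T<\infty$) with right-continuous filtration, $\mathcal F=\mathcal F_T$, $\mathcal F_0$ trivial and containing all $\mathrm P$-null sets. $\mathcal T$ is the set of stopping times $\tau\le T$. $\mathcal Q$ is a nonempty set of probability measures on $\mathcal F$, each absolutely continuous w.r.t. $\mathrm P$, $co(\mathcal Q)$ its convex hull. $\mathcal L^1(\mathcal Q)$ is the set of random variables $X$ with $\sup_{\mathrm Q\in\mathcal Q}\mathbb E_{\mathrm Q}[|X|]<\infty$. $Y=(Y_t)_{0\le t\le T}$ is a right-continuous adapted process with bounded paths, quasi left-uppersemicontinuous w.r.t. $\mathrm P$, and $Y^*:=\sup_{t\in[0,T]}|Y_t|$. $\mathcal X$ is the set of random variables $X$ with $|X|\le C(Y^*+1)$ $\mathrm P$-a.s. for some $C>0$; $\rho_{\mathcal Q}(X)=\sup_{\mathrm Q\in\mathcal Q}\mathbb E_{\mathrm Q}[X]$ for $X\in\mathcal X$. $\overline{\mathcal Q}$ is the set of probability measures $\mathrm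 Q$ on $\mathcal F$ such that every $X\in\mathcal X$ is $\mathrm Q$-integrable and $\mathbb E_{\mathrm Q}[X]\le\rho_{\mathcal Q}(X)$ for all $X\in\mathcal X$. *)

theory Defs
  imports "HOL-Probability.Probability"
begin

definition filtered_prob_space :: "'a measure \<Rightarrow> (real \<Rightarrow> 'a measure) \<Rightarrow> real \<Rightarrow> bool" where
  "filtered_prob_space P F T \<longleftrightarrow>
     prob_space P \<and> 0 < T \<and>
     (\<forall>t\<in>{0..T}. space (F t) = space P \<and> sets (F t) \<subseteq> sets P) \<and>
     (\<forall>s t. 0 \<le> s \<and> s \<le> t \<and> t \<le> T \<longrightarrow> sets (F s) \<subseteq> sets (F t)) \<and>
     sets (F T) = sets P \<and>
     (\<forall>t\<in>{0..<T}. sets (F t) = (\<Inter>s\<in>{t<..T}. sets (F s))) \<and>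
     (\<forall>A\<in>sets (F 0). emeasure P A = 0 \<or> emeasure P A = 1) \<and>
     (\<forall>N\<in>null_sets P. \<forall>A. A \<subseteq> N \<longrightarrow> A \<in> sets (F 0))"

definition stopping_times :: "'a measure \<Rightarrow> (real \<Rightarrow> 'a measure) \<Rightarrow> real \<Rightarrow> ('a \<Rightarrow> real) set" where
  "stopping_times P F T =
     {\<tau>. (\<forall>\<omega>\<in>space P. 0 \<le> \<tau> \<omega> \<and> \<tau> \<omega> \<le> T) \<and>
          (\<forall>t\<in>{0..T}. {\<omega>\<in>space P. \<tau> \<omega> \<le> t} \<in> sets (F t))}"

definition conv_measures :: "'a measure \<Rightarrow> 'a measure set \<Rightarrow> 'a measure set" where
  "conv_measures M \<Q> =
     {Q. sets Q = sets M \<and>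
         (\<exists>(n::nat) (c::nat \<Rightarrow> real) Qs. (\<forall>i<n. Qs i \<in> \<Q> \<and> 0 \<le> c i) \<and> (\<Sum>i<n. c i) = 1 \<and>
            (\<forall>A\<in>sets M. emeasure Q A = (\<Sum>i<n. ennreal (c i) * emeasure (Qs i) A)))}"

definition L1_set :: "'a measure \<Rightarrow> 'a measure set \<Rightarrow> ('a \<Rightarrow> real) set" where
  "L1_set M \<Q> = {X. X \<in> borel_measurable M \<and> (SUP Q\<in>\<Q>. \<integral>\<^sup>+ \<omega>. ennreal \<bar>X \<omega>\<bar> \<partial>Q) < \<infinity>}"

definition Ystar :: "(real \<Rightarrow> 'a \<Rightarrow> real) \<Rightarrow> real \<Rightarrow> 'a \<Rightarrow> real" where
  "Ystar Y T \<omega> = (SUP t\<in>{0..T}. \<bar>Y t \<omega>\<bar>)"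

definition quasi_left_usc :: "'a measure \<Rightarrow> (real \<Rightarrow> 'a measure) \<Rightarrow> real \<Rightarrow> (real \<Rightarrow> 'a \<Rightarrow> real) \<Rightarrow> bool" where
  "quasi_left_usc P F T Y \<longleftrightarrow>
     (\<forall>\<tau>s \<tau>. (\<forall>n. \<tau>s n \<in> stopping_times P F T) \<longrightarrow> \<tau> \<in> stopping_times P F T \<longrightarrow>
        (\<forall>\<omega>\<in>space P. incseq (\<lambda>n. \<tau>s n \<omega>) \<and> (\<lambda>n. \<tau>s n \<omega>) \<longlonglongrightarrow> \<tau> \<omega>) \<longrightarrow>
        (AE \<omega> in P. limsup (\<lambda>n. ereal (Y (\<tau>s n \<omega>) \<omega>)) \<le> ereal (Y (\<tau> \<omega>) \<omega>)))"

definition dom_class :: "'a measure \<Rightarrow> (real \<Rightarrow> 'a \<Rightarrow> real) \<Rightarrow> real \<Rightarrow> ('a \<Rightarrow> real) set" where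
  "dom_class P Y T = {X. X \<in> borel_measurable P \<and>
      (\<exists>C>0. AE \<omega> in P. \<bar>X \<omega>\<bar> \<le> C * (Ystar Y T \<omega> + 1))}"

definition rho :: "'a measure set \<Rightarrow> ('a \<Rightarrow> real) \<Rightarrow> ereal" where
  "rho \<Q> X = (SUP Q\<in>\<Q>. ereal (\<integral>\<omega>. X \<omega> \<partial>Q))"

definition Qbar :: "'a measure \<Rightarrow> 'a measure set \<Rightarrow> (real \<Rightarrow> 'a \<Rightarrow> real) \<Rightarrow> real \<Rightarrow> 'a measure set" where
  "Qbar P \<Q> Y T = {Q. prob_space Q \<and> sets Q = sets P \<and>
      (\<forall>X\<in>dom_class P Y T. integrable Q X \<and> ereal (\<integral>\<omega>. X \<omega> \<partial>Q) \<le> rho \<Q> X)}"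

end

theory Submission imports Defs begin

lemma nn_lin:
  fixes f :: "'a \<Rightarrow> ennreal"
  assumes sQ: "sets Q = sets M" and sQs: "\<And>i. i < n \<Longrightarrow> sets (Qs i) = sets M"
    and em: "\<And>A. A \<in> sets M \<Longrightarrow> emeasure Q A = (\<Sum>i<n. ennreal (c i) * emeasure (Qs i) A)"
    and f: "f \<in> borel_measurable M"
  shows "(\<integral>\<^sup>+x. f x \<partial>Q) = (\<Sum>i<n. ennreal (c i) * (\<integral>\<^sup>+x. f x \<partial>Qs i))"
  using f
proof (induct rule: borel_measurable_induct)
  case (cong f g)
  have spQ: "space Q = space M" using sQ by (rule sets_eq_imp_space_eq)
  have "(\<integral>\<^sup>+x. f x \<partial>Q) = (\<integral>\<^sup>+x. g x \<partial>Q)" by (intro nn_integral_cong) (simp add: spQ cong)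
  moreover have "\<And>i. i < n \<Longrightarrow> (\<integral>\<^sup>+x. f x \<partial>Qs i) = (\<integral>\<^sup>+x. g x \<partial>Qs i)"
    by (intro nn_integral_cong) (simp add: sets_eq_imp_space_eq[OF sQs] cong)
  ultimately show ?case using cong by simp
next
  case (set A)
  then show ?case using sQ sQs em by (simp add: nn_integral_indicator)
next
  case (mult u c')
  have mQ: "u \<in> borel_measurable Q" using mult measurable_cong_sets[OF sQ refl] by blast
  have mQs: "\<And>i. i < n \<Longrightarrow> u \<in> borel_measurable (Qs i)" using mult measurable_cong_sets[OF sQs refl] by blast
  have "(\<integral>\<^sup>+x. c' * u x \<partial>Q) = c' * (\<integral>\<^sup>+x. u x \<partial>Q)" using mQ by (rule nn_integral_cmult)
  also have "\<dots> = (\<Sum>i<n. ennreal (c i) * (c' * (\<integral>\<^sup>+x. u x \<partial>Qs i)))"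
    using mult by (simp add: sum_distrib_left mult.left_commute)
  also have "\<dots> = (\<Sum>i<n. ennreal (c i) * (\<integral>\<^sup>+x. c' * u x \<partial>Qs i))"
    by (intro sum.cong refl) (simp add: nn_integral_cmult mQs)
  finally show ?case .
next
  case (add u v)
  have mQ: "u \<in> borel_measurable Q" "v \<in> borel_measurable Q" using add measurable_cong_sets[OF sQ refl] by blast+
  have mQs: "\<And>i. i < n \<Longrightarrow> u \<in> borel_measurable (Qs i) \<and> v \<in> borel_measurable (Qs i)" using add measurable_cong_sets[OF sQs refl] by blast
  have "(\<integral>\<^sup>+x. v x + u x \<partial>Q) = (\<integral>\<^sup>+x. v x \<partial>Q) + (\<integral>\<^sup>+x. u x \<partial>Q)" using mQ by (simp add: nn_integral_add)
  also have "\<dots> = (\<Sum>i<n. ennreal (c i) * ((\<integral>\<^sup>+x. v x \<partial>Qs i) + (\<integral>\<^sup>+x. u x \<partial>Qs i)))"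
    using add by (simp add: sum.distrib distrib_left)
  also have "\<dots> = (\<Sum>i<n. ennreal (c i) * (\<integral>\<^sup>+x. v x + u x \<partial>Qs i))"
    by (intro sum.cong refl) (simp add: nn_integral_add mQs)
  finally show ?case .
next
  case (seq U)
  have mQ: "\<And>i. U i \<in> borel_measurable Q" using seq measurable_cong_sets[OF sQ refl] by blast
  have mQs: "\<And>i j. j < n \<Longrightarrow> U i \<in> borel_measurable (Qs j)" using seq measurable_cong_sets[OF sQs refl] by blast
  have "(\<integral>\<^sup>+x. (SUP i. U i) x \<partial>Q) = (SUP i. \<integral>\<^sup>+x. U i x \<partial>Q)"
    using nn_integral_monotone_convergence_SUP[OF seq(4) mQ] by (simp add: image_comp)
  also have "\<dots> = (SUP i. \<Sum>j<n. ennreal (c j) * (\<integral>\<^sup>+x. U i x \<partial>Qs j))" using seq by simp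
  also have "\<dots> = (\<Sum>j<n. SUP i. ennreal (c j) * (\<integral>\<^sup>+x. U i x \<partial>Qs j))"
    by (intro ennreal_SUP_sum) (auto intro!: mult_left_mono nn_integral_mono simp: incseq_def le_funD[OF seq(4)[unfolded incseq_def, rule_format]])
  also have "\<dots> = (\<Sum>j<n. ennreal (c j) * (SUP i. \<integral>\<^sup>+x. U i x \<partial>Qs j))"
    by (simp add: SUP_mult_left_ennreal)
  also have "\<dots> = (\<Sum>j<n. ennreal (c j) * (\<integral>\<^sup>+x. (SUP i. U i) x \<partial>Qs j))"
    by (intro sum.cong refl) (simp add: nn_integral_monotone_convergence_SUP[OF seq(4) mQs] image_comp)
  finally show ?case .
qed

lemma int_lin_nonneg:
  fixes g :: "'a \<Rightarrow> real"
  assumes sQ: "sets Q = sets M" and sQs: "\<And>i. i < n \<Longrightarrow> sets (Qs i) = sets M"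
    and em: "\<And>A. A \<in> sets M \<Longrightarrow> emeasure Q A = (\<Sum>i<n. ennreal (c i) * emeasure (Qs i) A)"
    and c: "\<And>i. i < n \<Longrightarrow> 0 \<le> c i"
    and g: "g \<in> borel_measurable M" and gn: "\<And>x. 0 \<le> g x"
    and int: "\<And>i. i < n \<Longrightarrow> integrable (Qs i) g"
  shows "integrable Q g \<and> integral\<^sup>L Q g = (\<Sum>i<n. c i * integral\<^sup>L (Qs i) g)"
proof -
  have mQ: "g \<in> borel_measurable Q" using g measurable_cong_sets[OF sQ refl] by blast
  have "(\<integral>\<^sup>+x. ennreal (g x) \<partial>Q) = (\<Sum>i<n. ennreal (c i) * (\<integral>\<^sup>+x. ennreal (g x) \<partial>Qs i))"
    by (rule nn_lin[OF sQ sQs em]) (use g in auto)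
  also have "\<dots> = (\<Sum>i<n. ennreal (c i * integral\<^sup>L (Qs i) g))"
    by (intro sum.cong refl) (simp add: nn_integral_eq_integral int gn ennreal_mult c)
  also have "\<dots> = ennreal (\<Sum>i<n. c i * integral\<^sup>L (Qs i) g)"
    by (rule sum_ennreal) (simp add: c gn)
  finally have eq: "(\<integral>\<^sup>+x. ennreal (g x) \<partial>Q) = ennreal (\<Sum>i<n. c i * integral\<^sup>L (Qs i) g)" .
  have iQ: "integrable Q g" by (rule integrableI_nn_integral_finite[OF mQ _ eq]) (simp add: gn)
  have nn: "0 \<le> (\<Sum>i<n. c i * integral\<^sup>L (Qs i) g)"
    by (intro sum_nonneg mult_nonneg_nonneg) (simp_all add: c gn)
  have "ennreal (integral\<^sup>L Q g) = ennreal (\<Sum>i<n. c i * integral\<^sup>L (Qs i) g)"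
    using eq nn_integral_eq_integral[OF iQ] gn by simp
  then have "integral\<^sup>L Q g = (\<Sum>i<n. c i * integral\<^sup>L (Qs i) g)"
    using nn by (simp add: gn)
  with iQ show ?thesis by simp
qed

lemma int_lin:
  fixes f :: "'a \<Rightarrow> real"
  assumes sQ: "sets Q = sets M" and sQs: "\<And>i. i < n \<Longrightarrow> sets (Qs i) = sets M"
    and em: "\<And>A. A \<in> sets M \<Longrightarrow> emeasure Q A = (\<Sum>i<n. ennreal (c i) * emeasure (Qs i) A)"
    and c: "\<And>i. i < n \<Longrightarrow> 0 \<le> c i"
    and f: "f \<in> borel_measurable M"
    and int: "\<And>i. i < n \<Longrightarrow> integrable (Qs i) f"
  shows "integral\<^sup>L Q f = (\<Sum>i<n. c i * integral\<^sup>L (Qs i) f)"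
proof -
  define p where "p = (\<lambda>x. max 0 (f x))"
  define q where "q = (\<lambda>x. max 0 (- f x))"
  have A: "integrable Q p \<and> integral\<^sup>L Q p = (\<Sum>i<n. c i * integral\<^sup>L (Qs i) p)"
    by (rule int_lin_nonneg[OF sQ sQs em c]) (use f int in \<open>auto simp: p_def\<close>)
  have B: "integrable Q q \<and> integral\<^sup>L Q q = (\<Sum>i<n. c i * integral\<^sup>L (Qs i) q)"
    by (rule int_lin_nonneg[OF sQ sQs em c]) (use f int in \<open>auto simp: q_def\<close>)
  have fe: "f = (\<lambda>x. p x - q x)" by (auto simp: p_def q_def fun_eq_iff)
  have ip: "\<And>i. i < n \<Longrightarrow> integrable (Qs i) p \<and> integrable (Qs i) q"
    using int by (auto simp: p_def q_def)
  have "integral\<^sup>L Q f = integral\<^sup>L Q p - integral\<^sup>L Q q" using A B by (simp add: fe)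
  also have "\<dots> = (\<Sum>i<n. c i * (integral\<^sup>L (Qs i) p - integral\<^sup>L (Qs i) q))"
    using A B by (simp add: sum_subtractf right_diff_distrib)
  also have "\<dots> = (\<Sum>i<n. c i * integral\<^sup>L (Qs i) f)"
    by (intro sum.cong refl) (simp add: fe ip)
  finally show ?thesis .
qed

theorem proposition6p2:
  fixes P :: "'a measure" and F :: "real \<Rightarrow> 'a measure" and T :: real
    and \<Q> :: "'a measure set" and Y :: "real \<Rightarrow> 'a \<Rightarrow> real"
  assumes filt: "filtered_prob_space P F T"
    and Q_ne: "\<Q> \<noteq> {}"
    and Q_prob: "\<And>Q. Q \<in> \<Q> \<Longrightarrow> prob_space Q \<and> sets Q = sets P \<and> absolutely_continuous P Q"
    and Y_adapted: "\<And>t. t \<in> {0..T} \<Longrightarrow> Y t \<in> borel_measurable (F t)"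
    and Y_rcont: "\<And>\<omega> t. \<omega> \<in> space P \<Longrightarrow> t \<in> {0..<T} \<Longrightarrow> continuous (at_right t) (\<lambda>s. Y s \<omega>)"
    and Y_bounded: "\<And>\<omega>. \<omega> \<in> space P \<Longrightarrow> bounded ((\<lambda>t. Y t \<omega>) ` {0..T})"
    and Y_qlusc: "quasi_left_usc P F T Y"
    and Ystar_L1: "Ystar Y T \<in> L1_set P \<Q>"
  shows "(SUP \<tau>\<in>stopping_times P F T. INF Q\<in>Qbar P \<Q> Y T. ereal (\<integral>\<omega>. Y (\<tau> \<omega>) \<omega> \<partial>Q))
           = (SUP \<tau>\<in>stopping_times P F T. INF Q\<in>\<Q>. ereal (\<integral>\<omega>. Y (\<tau> \<omega>) \<omega> \<partial>Q))
    \<and> (SUP \<tau>\<in>stopping_times P F T. INF Q\<in>\<Q>. ereal (\<integral>\<omega>. Y (\<tau> \<omega>) \<omega> \<partial>Q))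
           = (SUP \<tau>\<in>stopping_times P F T. INF Q\<in>conv_measures P \<Q>. ereal (\<integral>\<omega>. Y (\<tau> \<omega>) \<omega> \<partial>Q))"
proof -
  let ?S = "stopping_times P F T"
  have sQ: "\<And>Q. Q \<in> \<Q> \<Longrightarrow> sets Q = sets P" using Q_prob by blast
  have acQ: "\<And>Q. Q \<in> \<Q> \<Longrightarrow> absolutely_continuous P Q" using Q_prob by blast
  have Ym: "Ystar Y T \<in> borel_measurable P"
    and fin: "(SUP Q\<in>\<Q>. \<integral>\<^sup>+ \<omega>. ennreal \<bar>Ystar Y T \<omega>\<bar> \<partial>Q) < \<infinity>"
    using Ystar_L1 by (auto simp: L1_set_def)
  have Yint: "integrable Q (Ystar Y T)" if Q: "Q \<in> \<Q>" for Q
  proof -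
    have m: "Ystar Y T \<in> borel_measurable Q" using Ym measurable_cong_sets[OF sQ[OF Q] refl] by blast
    have "(\<integral>\<^sup>+ \<omega>. ennreal \<bar>Ystar Y T \<omega>\<bar> \<partial>Q) \<le> (SUP Q\<in>\<Q>. \<integral>\<^sup>+ \<omega>. ennreal \<bar>Ystar Y T \<omega>\<bar> \<partial>Q)"
      using Q by (rule SUP_upper)
    with fin have "(\<integral>\<^sup>+ \<omega>. ennreal \<bar>Ystar Y T \<omega>\<bar> \<partial>Q) < \<infinity>" using le_less_trans by blast
    with m show ?thesis by (simp add: integrable_iff_bounded)
  qed
  have QinQbar: "\<Q> \<subseteq> Qbar P \<Q> Y T"
  proof
    fix Q assume Q: "Q \<in> \<Q>"
    have "integrable Q X \<and> ereal (\<integral>\<omega>. X \<omega> \<partial>Q) \<le> rho \<Q> X" if X: "X \<in> dom_class P Y T" for X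
    proof
      obtain C where C: "C > 0" "AE \<omega> in P. \<bar>X \<omega>\<bar> \<le> C * (Ystar Y T \<omega> + 1)"
        and Xm: "X \<in> borel_measurable P" using X by (auto simp: dom_class_def)
      have AEQ: "AE \<omega> in Q. \<bar>X \<omega>\<bar> \<le> C * (Ystar Y T \<omega> + 1)"
        by (rule absolutely_continuous_AE[OF sQ[OF Q] acQ[OF Q] C(2)])
      have i2: "integrable Q (\<lambda>\<omega>. C * (Ystar Y T \<omega> + 1))"
        using Yint[OF Q] prob_space.finite_measure[of Q] Q_prob[OF Q] by (auto intro!: integrable_mult_right finite_measure.integrable_const)
      show "integrable Q X"
        by (rule Bochner_Integration.integrable_bound[OF i2]) (use Xm measurable_cong_sets[OF sQ[OF Q] refl] AEQ in \<open>auto elim!: AE_mp\<close>)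
      show "ereal (\<integral>\<omega>. X \<omega> \<partial>Q) \<le> rho \<Q> X"
        unfolding rho_def using Q by (rule SUP_upper)
    qed
    then show "Q \<in> Qbar P \<Q> Y T" using Q_prob[OF Q] by (auto simp: Qbar_def)
  qed
  have QinCo: "\<Q> \<subseteq> conv_measures P \<Q>"
  proof
    fix Q assume Q: "Q \<in> \<Q>"
    show "Q \<in> conv_measures P \<Q>" unfolding conv_measures_def
      using Q sQ[OF Q] by (auto intro!: exI[of _ "1::nat"] exI[of _ "\<lambda>_. 1::real"] exI[of _ "\<lambda>_. Q"])
  qed
  have bnd: "\<bar>Y (\<tau> \<omega>) \<omega>\<bar> \<le> Ystar Y T \<omega>" if t: "\<tau> \<in> ?S" and w: "\<omega> \<in> space P" for \<tau> \<omega>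
  proof -
    have tt: "\<tau> \<omega> \<in> {0..T}" using t w by (auto simp: stopping_times_def)
    obtain B where B: "\<And>x. x \<in> (\<lambda>t. Y t \<omega>) ` {0..T} \<Longrightarrow> norm x \<le> B"
      using Y_bounded[OF w] by (auto simp: bounded_iff)
    have "bdd_above ((\<lambda>t. \<bar>Y t \<omega>\<bar>) ` {0..T})"
      by (rule bdd_aboveI[of _ B]) (use B in auto)
    then show ?thesis unfolding Ystar_def by (rule cSUP_upper[OF tt])
  qed
  obtain Q0 where Q0: "Q0 \<in> \<Q>" using Q_ne by blast
  have zero: "(\<integral>\<omega>. Y (\<tau> \<omega>) \<omega> \<partial>Q) = 0"
    if nm: "(\<lambda>\<omega>. Y (\<tau> \<omega>) \<omega>) \<notin> borel_measurable P" and sq: "sets Q = sets P" for \<tau> Q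
  proof -
    have "(\<lambda>\<omega>. Y (\<tau> \<omega>) \<omega>) \<notin> borel_measurable Q" using nm measurable_cong_sets[OF sq refl] by blast
    then show ?thesis by (intro not_integrable_integral_eq) auto
  qed
  have eq1: "(INF Q\<in>Qbar P \<Q> Y T. ereal (\<integral>\<omega>. Y (\<tau> \<omega>) \<omega> \<partial>Q)) = (INF Q\<in>\<Q>. ereal (\<integral>\<omega>. Y (\<tau> \<omega>) \<omega> \<partial>Q))"
    if t: "\<tau> \<in> ?S" for \<tau>
  proof (rule antisym)
    show "(INF Q\<in>Qbar P \<Q> Y T. ereal (\<integral>\<omega>. Y (\<tau> \<omega>) \<omega> \<partial>Q)) \<le> (INF Q\<in>\<Q>. ereal (\<integral>\<omega>. Y (\<tau> \<omega>) \<omega> \<partial>Q))"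
      by (rule INF_superset_mono[OF QinQbar order_refl])
    show "(INF Q\<in>\<Q>. ereal (\<integral>\<omega>. Y (\<tau> \<omega>) \<omega> \<partial>Q)) \<le> (INF Q\<in>Qbar P \<Q> Y T. ereal (\<integral>\<omega>. Y (\<tau> \<omega>) \<omega> \<partial>Q))"
    proof (rule INF_greatest)
      fix Q' assume Q': "Q' \<in> Qbar P \<Q> Y T"
      then have sQ': "sets Q' = sets P"
        and dom: "\<And>X. X \<in> dom_class P Y T \<Longrightarrow> ereal (\<integral>\<omega>. X \<omega> \<partial>Q') \<le> rho \<Q> X"
        by (auto simp: Qbar_def)
      show "(INF Q\<in>\<Q>. ereal (\<integral>\<omega>. Y (\<tau> \<omega>) \<omega> \<partial>Q)) \<le> ereal (\<integral>\<omega>. Y (\<tau> \<omega>) \<omega> \<partial>Q')"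
      proof (cases "(\<lambda>\<omega>. Y (\<tau> \<omega>) \<omega>) \<in> borel_measurable P")
        case True
        have "(\<lambda>\<omega>. - Y (\<tau> \<omega>) \<omega>) \<in> dom_class P Y T"
          unfolding dom_class_def
          using True by (auto intro!: exI[of _ "1::real"] AE_I2 order_trans[OF bnd[OF t]])
        then have "ereal (\<integral>\<omega>. - Y (\<tau> \<omega>) \<omega> \<partial>Q') \<le> rho \<Q> (\<lambda>\<omega>. - Y (\<tau> \<omega>) \<omega>)" by (rule dom)
        also have "\<dots> = (SUP Q\<in>\<Q>. - ereal (\<integral>\<omega>. Y (\<tau> \<omega>) \<omega> \<partial>Q))" by (simp add: rho_def)
        also have "\<dots> = - (INF Q\<in>\<Q>. ereal (\<integral>\<omega>. Y (\<tau> \<omega>) \<omega> \<partial>Q))" by (rule ereal_SUP_uminus_eq)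
        finally have "- ereal (\<integral>\<omega>. Y (\<tau> \<omega>) \<omega> \<partial>Q') \<le> - (INF Q\<in>\<Q>. ereal (\<integral>\<omega>. Y (\<tau> \<omega>) \<omega> \<partial>Q))" by simp
        then show ?thesis by (simp only: ereal_minus_le_minus)
      next
        case False
        have "(INF Q\<in>\<Q>. ereal (\<integral>\<omega>. Y (\<tau> \<omega>) \<omega> \<partial>Q)) \<le> ereal (\<integral>\<omega>. Y (\<tau> \<omega>) \<omega> \<partial>Q0)"
          using Q0 by (rule INF_lower)
        also have "\<dots> = ereal (\<integral>\<omega>. Y (\<tau> \<omega>) \<omega> \<partial>Q')"
          using zero[OF False sQ[OF Q0]] zero[OF False sQ'] by simp
        finally show ?thesis .
      qed
    qed
  qed
  have eq2: "(INF Q\<in>\<Q>. ereal (\<integral>\<omega>. Y (\<tau> \<omega>) \<omega> \<partial>Q)) = (INF Q\<in>conv_measures P \<Q>. ereal (\<integral>\<omega>. Y (\<tau> \<omega>) \<omega> \<partial>Q))"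
    if t: "\<tau> \<in> ?S" for \<tau>
  proof (rule antisym)
    show "(INF Q\<in>conv_measures P \<Q>. ereal (\<integral>\<omega>. Y (\<tau> \<omega>) \<omega> \<partial>Q)) \<le> (INF Q\<in>\<Q>. ereal (\<integral>\<omega>. Y (\<tau> \<omega>) \<omega> \<partial>Q))"
      by (rule INF_superset_mono[OF QinCo order_refl])
    show "(INF Q\<in>\<Q>. ereal (\<integral>\<omega>. Y (\<tau> \<omega>) \<omega> \<partial>Q)) \<le> (INF Q\<in>conv_measures P \<Q>. ereal (\<integral>\<omega>. Y (\<tau> \<omega>) \<omega> \<partial>Q))"
    proof (rule INF_greatest)
      fix Q' assume Q': "Q' \<in> conv_measures P \<Q>"
      then have sQ': "sets Q' = sets P" and "\<exists>(n::nat) (c::nat \<Rightarrow> real) Qs. (\<forall>i<n. Qs i \<in> \<Q> \<and> 0 \<le> c i) \<and> (\<Sum>i<n. c i) = 1 \<and>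
            (\<forall>A\<in>sets P. emeasure Q' A = (\<Sum>i<n. ennreal (c i) * emeasure (Qs i) A))"
        unfolding conv_measures_def by auto
      then obtain n :: nat and c :: "nat \<Rightarrow> real" and Qs where
        H: "(\<forall>i<n. Qs i \<in> \<Q> \<and> 0 \<le> c i) \<and> (\<Sum>i<n. c i) = 1 \<and>
            (\<forall>A\<in>sets P. emeasure Q' A = (\<Sum>i<n. ennreal (c i) * emeasure (Qs i) A))"
        by blast
      have QsQ: "\<And>i. i < n \<Longrightarrow> Qs i \<in> \<Q>" and c: "\<And>i. i < n \<Longrightarrow> 0 \<le> c i"
        and c1: "(\<Sum>i<n. c i) = 1"
        and em: "\<And>A. A \<in> sets P \<Longrightarrow> emeasure Q' A = (\<Sum>i<n. ennreal (c i) * emeasure (Qs i) A)"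
        using H by auto
      let ?I = "(INF Q\<in>\<Q>. ereal (\<integral>\<omega>. Y (\<tau> \<omega>) \<omega> \<partial>Q))"
      show "?I \<le> ereal (\<integral>\<omega>. Y (\<tau> \<omega>) \<omega> \<partial>Q')"
      proof (cases "(\<lambda>\<omega>. Y (\<tau> \<omega>) \<omega>) \<in> borel_measurable P")
        case True
        have iQs: "integrable (Qs i) (\<lambda>\<omega>. Y (\<tau> \<omega>) \<omega>)" if i: "i < n" for i
        proof (rule Bochner_Integration.integrable_bound[OF Yint[OF QsQ[OF i]]])
          show "(\<lambda>\<omega>. Y (\<tau> \<omega>) \<omega>) \<in> borel_measurable (Qs i)"
            using True measurable_cong_sets[OF sQ[OF QsQ[OF i]] refl] by blast
          have sp: "space (Qs i) = space P" using sets_eq_imp_space_eq[OF sQ[OF QsQ[OF i]]] .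
          show "AE x in Qs i. norm (Y (\<tau> x) x) \<le> norm (Ystar Y T x)"
            by (rule AE_I2) (use bnd[OF t] sp in \<open>force intro: order_trans[OF _ abs_ge_self]\<close>)
        qed
        have lin: "(\<integral>\<omega>. Y (\<tau> \<omega>) \<omega> \<partial>Q') = (\<Sum>i<n. c i * (\<integral>\<omega>. Y (\<tau> \<omega>) \<omega> \<partial>Qs i))"
          by (rule int_lin[OF sQ' sQ[OF QsQ] em c True iQs]) auto
        show ?thesis
        proof (cases "?I = -\<infinity>")
          case True then show ?thesis by simp
        next
          case False
          have "?I \<le> ereal (\<integral>\<omega>. Y (\<tau> \<omega>) \<omega> \<partial>Q0)" using Q0 by (rule INF_lower)
          then have "?I \<noteq> \<infinity>" by auto
          with False obtain r where r: "?I = ereal r" by (cases ?I) auto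
          have ge: "r \<le> (\<integral>\<omega>. Y (\<tau> \<omega>) \<omega> \<partial>Qs i)" if i: "i < n" for i
          proof -
            have "?I \<le> ereal (\<integral>\<omega>. Y (\<tau> \<omega>) \<omega> \<partial>Qs i)" using QsQ[OF i] by (rule INF_lower)
            then show ?thesis using r by simp
          qed
          have "r = (\<Sum>i<n. c i * r)" using c1 by (simp add: sum_distrib_right[symmetric])
          also have "\<dots> \<le> (\<Sum>i<n. c i * (\<integral>\<omega>. Y (\<tau> \<omega>) \<omega> \<partial>Qs i))"
            by (intro sum_mono mult_left_mono) (auto simp: ge c)
          finally show ?thesis using r lin by simp
        qed
      next
        case False
        have "?I \<le> ereal (\<integral>\<omega>. Y (\<tau> \<omega>) \<omega> \<partial>Q0)"
          using Q0 by (rule INF_lower)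
        also have "\<dots> = ereal (\<integral>\<omega>. Y (\<tau> \<omega>) \<omega> \<partial>Q')"
          using zero[OF False sQ[OF Q0]] zero[OF False sQ'] by simp
        finally show ?thesis .
      qed
    qed
  qed
  show ?thesis using eq1 eq2 by (auto intro!: SUP_cong)
qed

end
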